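(* Let $G$ be a triangle-free graph with at least five vertices and minimum degree at least $3$. Define $G'$ with vertex set $V(G)\times\{0,1,2,3\}$ whose edges are: $(v,i)(v,j)$ for every $v\in V(G)$ and distinct $i,j\in\{0,1,2,3\}$; $(u,0)(v,0)$ for all distinct $u,v\in V(G)$; and $(u,i)(v,i)$ for $i\in\{1,2,3\}$ whenever $uv\in E(G)$; there are no other edges. Let $C=V(G)\times\{0\}$ (a clique of $G'$). Let $G''$ be obtained from $G'$ by adding, for each $w\in V(G')\setminus C$, a new vertex $w'$ adjacent only to $w$. Then $G'$ and $G''$ are diamond-free, and the following are equivalent: (1) $G$ is not $3$-colorable; (2) $C$ is a strong clique in $G'$; (3) $G'$ has a strong clique; (4) $C$ is a strong clique in $G''$; (5) every vertex of $G''$ is contained in a strong clique; (6) every clique in the collection $\{C\}\cup\{\{w,w'\}: w\in V(G')\setminus C\}$ is strong in $G''$; (7) $V(G'')$ can be partitioned into strong cliques.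
   Context: A clique is strong if it intersects every inclusion-maximal stable set. The diamond is $K_4$ minus one edge; diamond-free means no induced subgraph isomorphic to the diamond. A graph is $3$-colorable if its vertex set can be partitioned into three stable sets. *)

theory Defs
  imports Main
begin

(* A graph is given by a vertex set V and a symmetric irreflexive adjacency relation E;
   only adjacencies between vertices of V are relevant. *)

definition is_clique :: "'a set \<Rightarrow> ('a \<Rightarrow> 'a \<Rightarrow> bool) \<Rightarrow> 'a set \<Rightarrow> bool" where
  "is_clique V E K \<longleftrightarrow> K \<subseteq> V \<and> (\<forall>x\<in>K. \<forall>y\<in>K. x \<noteq> y \<longrightarrow> E x y)"

definition is_stable :: "'a set \<Rightarrow> ('a \<Rightarrow> 'a \<Rightarrow> bool) \<Rightarrow> 'a set \<Rightarrow> bool" where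
  "is_stable V E S \<longleftrightarrow> S \<subseteq> V \<and> (\<forall>x\<in>S. \<forall>y\<in>S. x \<noteq> y \<longrightarrow> \<not> E x y)"

definition maximal_stable :: "'a set \<Rightarrow> ('a \<Rightarrow> 'a \<Rightarrow> bool) \<Rightarrow> 'a set \<Rightarrow> bool" where
  "maximal_stable V E S \<longleftrightarrow> is_stable V E S \<and> (\<forall>T. is_stable V E T \<and> S \<subseteq> T \<longrightarrow> T = S)"

definition strong_clique :: "'a set \<Rightarrow> ('a \<Rightarrow> 'a \<Rightarrow> bool) \<Rightarrow> 'a set \<Rightarrow> bool" where
  "strong_clique V E K \<longleftrightarrow> is_clique V E K \<and> (\<forall>S. maximal_stable V E S \<longrightarrow> K \<inter> S \<noteq> {})"

definition triangle_free :: "'a set \<Rightarrow> ('a \<Rightarrow> 'a \<Rightarrow> bool) \<Rightarrow> bool" where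
  "triangle_free V E \<longleftrightarrow> \<not> (\<exists>a\<in>V. \<exists>b\<in>V. \<exists>c\<in>V. E a b \<and> E b c \<and> E a c)"

definition min_degree_ge :: "'a set \<Rightarrow> ('a \<Rightarrow> 'a \<Rightarrow> bool) \<Rightarrow> nat \<Rightarrow> bool" where
  "min_degree_ge V E k \<longleftrightarrow> (\<forall>v\<in>V. card {u\<in>V. E v u} \<ge> k)"

definition diamond_free :: "'a set \<Rightarrow> ('a \<Rightarrow> 'a \<Rightarrow> bool) \<Rightarrow> bool" where
  "diamond_free V E \<longleftrightarrow> \<not> (\<exists>a\<in>V. \<exists>b\<in>V. \<exists>c\<in>V. \<exists>d\<in>V.
      distinct [a, b, c, d] \<and> E a b \<and> E a c \<and> E a d \<and> E b c \<and> E b d \<and> \<not> E c d)"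

definition three_colorable :: "'a set \<Rightarrow> ('a \<Rightarrow> 'a \<Rightarrow> bool) \<Rightarrow> bool" where
  "three_colorable V E \<longleftrightarrow> (\<exists>A B C. is_stable V E A \<and> is_stable V E B \<and> is_stable V E C \<and>
      A \<union> B \<union> C = V \<and> A \<inter> B = {} \<and> A \<inter> C = {} \<and> B \<inter> C = {})"

definition partition_into_strong_cliques :: "'a set \<Rightarrow> ('a \<Rightarrow> 'a \<Rightarrow> bool) \<Rightarrow> bool" where
  "partition_into_strong_cliques V E \<longleftrightarrow> (\<exists>P. \<Union>P = V \<and> (\<forall>K\<in>P. K \<noteq> {} \<and> strong_clique V E K) \<and>
      (\<forall>K1\<in>P. \<forall>K2\<in>P. K1 \<noteq> K2 \<longrightarrow> K1 \<inter> K2 = {}))"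

definition Gp_V :: "'a set \<Rightarrow> ('a \<times> nat) set" where
  "Gp_V V = V \<times> {0, 1, 2, 3}"

definition Gp_E :: "('a \<Rightarrow> 'a \<Rightarrow> bool) \<Rightarrow> ('a \<times> nat) \<Rightarrow> ('a \<times> nat) \<Rightarrow> bool" where
  "Gp_E E x y \<longleftrightarrow>
     (fst x = fst y \<and> snd x \<noteq> snd y) \<or>
     (snd x = 0 \<and> snd y = 0 \<and> fst x \<noteq> fst y) \<or>
     (snd x = snd y \<and> snd x \<in> {1, 2, 3} \<and> E (fst x) (fst y))"

definition Gp_C :: "'a set \<Rightarrow> ('a \<times> nat) set" where
  "Gp_C V = V \<times> {0}"

(* The graph G'': vertex (w, False) is w itself, (w, True) is the new pendant vertex w' *)
definition Gpp_V :: "'a set \<Rightarrow> (('a \<times> nat) \<times> bool) set" where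
  "Gpp_V V = Gp_V V \<times> {False} \<union> (Gp_V V - Gp_C V) \<times> {True}"

definition Gpp_E :: "'a set \<Rightarrow> ('a \<Rightarrow> 'a \<Rightarrow> bool) \<Rightarrow> (('a \<times> nat) \<times> bool) \<Rightarrow> (('a \<times> nat) \<times> bool) \<Rightarrow> bool" where
  "Gpp_E V E x y \<longleftrightarrow>
     (\<not> snd x \<and> \<not> snd y \<and> Gp_E E (fst x) (fst y)) \<or>
     (fst x = fst y \<and> snd x \<noteq> snd y \<and> fst x \<notin> Gp_C V)"

end

theory Submission
  imports Defs
begin

lemma max_stable_ext:
  assumes "finite V" "is_stable V E T" shows "\<exists>S. maximal_stable V E S \<and> T \<subseteq> S"
proof -
  have "\<forall>T. is_stable V E T \<and> card (V - T) = n \<longrightarrow> (\<exists>S. maximal_stable V E S \<and> T \<subseteq> S)" for n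
  proof (induction n rule: less_induct)
    case (less n)
    show ?case
    proof (intro allI impI)
      fix T assume h: "is_stable V E T \<and> card (V - T) = n"
      show "\<exists>S. maximal_stable V E S \<and> T \<subseteq> S"
      proof (cases "maximal_stable V E T")
        case True thus ?thesis by blast
      next
        case False
        then obtain T' where T': "is_stable V E T'" "T \<subseteq> T'" "T' \<noteq> T" using h unfolding maximal_stable_def by blast
        have "V - T' \<subset> V - T" using T' h unfolding is_stable_def by blast
        hence "card (V - T') < n" using h assms(1) by (metis finite_Diff psubset_card_mono)
        then obtain S where "maximal_stable V E S" "T' \<subseteq> S" using less T' by blast
        thus ?thesis using T' by blast
      qed
    qed
  qed
  thus ?thesis using assms by blast
qed

lemma not_strong:
  assumes "finite V" "is_stable V E T" "\<forall>k\<in>K. \<exists>t\<in>T. E k t" "\<forall>x. \<not> E x x"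
  shows "\<not> strong_clique V E K"
proof
  assume s: "strong_clique V E K"
  obtain S where S: "maximal_stable V E S" "T \<subseteq> S" using max_stable_ext assms by blast
  then obtain k where k: "k\<in>K" "k\<in>S" using s unfolding strong_clique_def by blast
  then obtain t where t: "t\<in>T" "E k t" using assms by blast
  have "k \<noteq> t" using t assms(4) by metis
  then show False using S k t unfolding maximal_stable_def is_stable_def by blast
qed

lemma add_stable:
  assumes "maximal_stable V E S" "x\<in>V" "x\<notin>S" "\<forall>y\<in>S. \<not> E x y \<and> \<not> E y x"
  shows False
proof -
  have "is_stable V E (insert x S)" using assms unfolding maximal_stable_def is_stable_def by blast
  thus False using assms unfolding maximal_stable_def by blast
qed

lemma Gp_E_irrefl: "(\<forall>v. \<not> E v v) \<Longrightarrow> \<forall>x. \<not> Gp_E E x x" by (auto simp: Gp_E_def)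
lemma Gpp_E_irrefl: "(\<forall>v. \<not> E v v) \<Longrightarrow> \<forall>x. \<not> Gpp_E V E x x" by (auto simp: Gpp_E_def Gp_E_def)

lemma col_from:
  assumes "\<forall>v\<in>V. \<exists>i\<in>{1,2,3}. (v,i)\<in>S" and "\<forall>x\<in>S. \<forall>y\<in>S. x\<noteq>y \<longrightarrow> \<not> Gp_E E x y"
  shows "three_colorable V E"
proof -
  let ?A = "\<lambda>i::nat. {v\<in>V. (v,i)\<in>S}"
  have st: "is_stable V E (?A i)" if "i \<in> {1,2,3}" for i
    using assms(2) that unfolding is_stable_def Gp_E_def by fastforce
  have d: "?A i \<inter> ?A j = {}" if "i \<noteq> j" for i j
    using assms(2) that unfolding Gp_E_def by fastforce
  have u: "?A 1 \<union> ?A 2 \<union> ?A 3 = V" using assms(1) by auto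
  show ?thesis unfolding three_colorable_def
    apply (rule exI[of _ "?A 1"], rule exI[of _ "?A 2"], rule exI[of _ "?A 3"])
    using st d u by simp
qed

lemma col_T:
  assumes "three_colorable V E"
  shows "\<exists>T. is_stable (Gp_V V) (Gp_E E) T \<and> (\<forall>v\<in>V. \<exists>i\<in>{1,2,3}. (v,i)\<in>T)"
proof -
  obtain A B C where h: "is_stable V E A" "is_stable V E B" "is_stable V E C" "A\<union>B\<union>C = V"
     "A\<inter>B={}" "A\<inter>C={}" "B\<inter>C={}"
    using assms unfolding three_colorable_def by blast
  let ?T = "A\<times>{1} \<union> B\<times>{2} \<union> C\<times>{3::nat}"
  have "is_stable (Gp_V V) (Gp_E E) ?T" using h unfolding is_stable_def Gp_V_def Gp_E_def by auto
  moreover have "\<forall>v\<in>V. \<exists>i\<in>{1,2,3}. (v,i)\<in>?T" using h(4) by auto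
  ultimately show ?thesis by blast
qed

lemma three_elems:
  assumes "card A \<ge> 3" shows "\<exists>a b c. a\<in>A \<and> b\<in>A \<and> c\<in>A \<and> a\<noteq>b \<and> a\<noteq>c \<and> b\<noteq>c"
proof -
  have "finite A" using assms card.infinite by fastforce
  obtain B where "B \<subseteq> A" "card B = 3" using assms by (meson obtain_subset_with_card_n)
  then show ?thesis by (auto simp: card_3_iff)
qed

lemma gadget:
  assumes v: "v\<in>V" and irr: "\<forall>x. \<not> E x x" and five: "card V \<ge> 5" and deg: "min_degree_ge V E 3"
    and fin: "finite V"
  shows "\<exists>T. is_stable (Gp_V V) (Gp_E E) T \<and> (\<forall>k\<in>{0,1,2,3}. \<exists>t\<in>T. Gp_E E (v,k) t)"
proof -
  obtain a b c where abc: "a\<in>{u\<in>V. E v u}" "b\<in>{u\<in>V. E v u}" "c\<in>{u\<in>V. E v u}" "a\<noteq>b" "a\<noteq>c" "b\<noteq>c"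
    using three_elems deg v unfolding min_degree_ge_def by blast
  have nv: "a \<noteq> v" "b\<noteq>v" "c\<noteq>v" using abc irr by auto
  have "card {v,a,b,c} \<le> 4" by (auto simp: card_insert_if)
  hence "\<not> V \<subseteq> {v,a,b,c}" using five fin by (metis card_mono finite.emptyI finite.insertI le_trans not_less_eq_eq numeral_eq_Suc pred_numeral_simps(2,3) Suc_le_mono)
  then obtain w where w: "w\<in>V" "w\<notin>{v,a,b,c}" by blast
  let ?T = "{(a,1),(b,2),(c,3),(w,0::nat)}"
  have "is_stable (Gp_V V) (Gp_E E) ?T" using abc w unfolding is_stable_def Gp_V_def Gp_E_def by auto
  moreover have "\<forall>k\<in>{0,1,2,3}. \<exists>t\<in>?T. Gp_E E (v,k) t" using abc w nv unfolding Gp_E_def by auto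
  ultimately show ?thesis by blast
qed

lemma Gp_fin: "finite V \<Longrightarrow> finite (Gp_V V)" by (simp add: Gp_V_def)
lemma Gpp_fin: "finite V \<Longrightarrow> finite (Gpp_V V)" by (simp add: Gpp_V_def Gp_V_def)

lemma G1_noK:
  assumes fin: "finite V" and sym: "\<And>u v. E u v \<Longrightarrow> E v u" and irr: "\<forall>x. \<not> E x x"
    and tf: "triangle_free V E" and five: "card V \<ge> 5" and deg: "min_degree_ge V E 3"
    and col: "three_colorable V E"
  shows "\<not> strong_clique (Gp_V V) (Gp_E E) K"
proof
  assume s: "strong_clique (Gp_V V) (Gp_E E) K"
  hence Kc: "is_clique (Gp_V V) (Gp_E E) K" by (simp add: strong_clique_def)
  have cl: "\<forall>x\<in>K. \<forall>y\<in>K. x\<noteq>y \<longrightarrow> Gp_E E x y" using Kc unfolding is_clique_def by simp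
  have girr: "\<forall>x. \<not> Gp_E E x x" using Gp_E_irrefl irr by blast
  show False
  proof (cases "K \<subseteq> Gp_C V")
    case True
    obtain T where T: "is_stable (Gp_V V) (Gp_E E) T" "\<forall>v\<in>V. \<exists>i\<in>{1,2,3}. (v,i)\<in>T"
      using col_T col by blast
    have "\<forall>k\<in>K. \<exists>t\<in>T. Gp_E E k t"
    proof
      fix k assume "k\<in>K"
      then obtain v where v: "k = (v,0)" "v\<in>V" using True unfolding Gp_C_def by auto
      then obtain i where "i\<in>{1,2,3}" "(v,i)\<in>T" using T by blast
      thus "\<exists>t\<in>T. Gp_E E k t" using v unfolding Gp_E_def by force
    qed
    thus False using not_strong[OF Gp_fin[OF fin] T(1) _ girr] s by blast
  next
    case False
    then obtain v i where vi: "(v,i)\<in>K" "i\<noteq>0" using Kc unfolding is_clique_def Gp_C_def Gp_V_def by auto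
    hence vV: "v\<in>V" "i\<in>{1,2,3}" using Kc unfolding is_clique_def Gp_V_def by auto
    show False
    proof (cases "\<forall>y\<in>K. fst y = v")
      case True
      obtain T where T: "is_stable (Gp_V V) (Gp_E E) T" "\<forall>k\<in>{0,1,2,3}. \<exists>t\<in>T. Gp_E E (v,k) t"
        using gadget[OF vV(1) irr five deg fin] by blast
      have "\<forall>k\<in>K. \<exists>t\<in>T. Gp_E E k t"
      proof
        fix k assume k: "k\<in>K"
        have "k \<in> V \<times> {0,1,2,3}" using k Kc unfolding is_clique_def Gp_V_def by blast
        then obtain j where "k = (v,j)" "j \<in> {0,1,2,3}" using True k by force
        thus "\<exists>t\<in>T. Gp_E E k t" using T by blast
      qed
      thus False using not_strong[OF Gp_fin[OF fin] T(1) _ girr] s by blast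
    next
      case False
      then obtain u j where uj: "(u,j)\<in>K" "u\<noteq>v" by auto
      hence uV: "u\<in>V" using Kc unfolding is_clique_def Gp_V_def by auto
      have "Gp_E E (v,i) (u,j)" using Kc vi uj unfolding is_clique_def by auto
      hence ji: "j = i" "E v u" using vi uj unfolding Gp_E_def by auto
      have sub: "K \<subseteq> {(v,i),(u,i)}"
      proof
        fix z assume z: "z\<in>K"
        show "z \<in> {(v,i),(u,i)}"
        proof (rule ccontr)
          assume nz: "z \<notin> {(v,i),(u,i)}"
          obtain t k where tk: "z = (t,k)" "t\<in>V" using z Kc unfolding is_clique_def Gp_V_def by auto
          have n1: "(v,i) \<noteq> z" "(u,i) \<noteq> z" using nz by auto
          have a1: "Gp_E E (v,i) (t,k)" using cl[rule_format, OF vi(1) z n1(1)] tk(1) by simp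
          have a2: "Gp_E E (u,i) (t,k)" using cl[rule_format, OF _ z n1(2)] uj(1) ji(1) tk(1) by simp
          show False
          proof (cases "t = v")
            case True thus False using a1 a2 nz tk(1) uj(2) vV(2) irr unfolding Gp_E_def by auto
          next
            case tv: False
            show False
            proof (cases "t = u")
              case True thus False using a1 a2 nz tk(1) uj(2) vV(2) irr unfolding Gp_E_def by auto
            next
              case False
              hence "E v t" "E u t" using tv a1 a2 vV(2) unfolding Gp_E_def by auto
              thus False using tf ji(2) vV(1) uV tk(2) unfolding triangle_free_def by blast
            qed
          qed
        qed
      qed
      define k' where "k' = (if i = 1 then 2 else (1::nat))"
      have k': "k' \<noteq> 0" "k' \<noteq> i" "k' \<in> {1,2,3}" unfolding k'_def by auto
      let ?T = "{(v,0::nat),(u, k')}"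
      have T: "is_stable (Gp_V V) (Gp_E E) ?T" using vV uV uj k' unfolding is_stable_def Gp_V_def Gp_E_def by auto
      have "\<forall>k\<in>{(v,i),(u,i)}. \<exists>t\<in>?T. Gp_E E k t" using vV k' unfolding Gp_E_def by auto
      hence "\<forall>k\<in>K. \<exists>t\<in>?T. Gp_E E k t" using sub by blast
      thus False using not_strong[OF Gp_fin[OF fin] T _ girr] s by blast
    qed
  qed
qed

lemma G1_C_strong:
  assumes "\<not> three_colorable V E"
  shows "strong_clique (Gp_V V) (Gp_E E) (Gp_C V)"
  unfolding strong_clique_def
proof
  show "is_clique (Gp_V V) (Gp_E E) (Gp_C V)" unfolding is_clique_def Gp_C_def Gp_V_def Gp_E_def by auto
  show "\<forall>S. maximal_stable (Gp_V V) (Gp_E E) S \<longrightarrow> Gp_C V \<inter> S \<noteq> {}"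
  proof (intro allI impI notI)
    fix S assume S: "maximal_stable (Gp_V V) (Gp_E E) S" and e: "Gp_C V \<inter> S = {}"
    have SV: "S \<subseteq> Gp_V V" and st: "\<forall>x\<in>S. \<forall>y\<in>S. x\<noteq>y \<longrightarrow> \<not> Gp_E E x y"
      using S unfolding maximal_stable_def is_stable_def by auto
    have "\<forall>v\<in>V. \<exists>i\<in>{1,2,3}. (v,i)\<in>S"
    proof (rule ballI, rule ccontr)
      fix v assume v: "v\<in>V" and n: "\<not> (\<exists>i\<in>{1,2,3}. (v,i)\<in>S)"
      have "(v,0) \<notin> S" using e v unfolding Gp_C_def by auto
      moreover have "(v,0) \<in> Gp_V V" using v unfolding Gp_V_def by auto
      moreover have "\<forall>y\<in>S. \<not> Gp_E E (v,0) y \<and> \<not> Gp_E E y (v,0)"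
      proof
        fix y assume y: "y\<in>S"
        then obtain u j where uj: "y = (u,j)" "u\<in>V" "j\<in>{0,1,2,3}" using SV unfolding Gp_V_def by auto
        have "(u,0) \<notin> S" using e uj(2) unfolding Gp_C_def by auto
        thus "\<not> Gp_E E (v,0) y \<and> \<not> Gp_E E y (v,0)" using n y uj unfolding Gp_E_def by auto
      qed
      ultimately show False using add_stable[OF S] by blast
    qed
    thus False using col_from st assms by blast
  qed
qed

lemma G2_C_strong:
  assumes "\<not> three_colorable V E"
  shows "strong_clique (Gpp_V V) (Gpp_E V E) (Gp_C V \<times> {False})"
  unfolding strong_clique_def
proof
  show "is_clique (Gpp_V V) (Gpp_E V E) (Gp_C V \<times> {False})"
  proof -
    have "Gp_C V \<subseteq> Gp_V V" by (auto simp: Gp_C_def Gp_V_def)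
    hence "Gp_C V \<times> {False} \<subseteq> Gpp_V V" by (auto simp: Gpp_V_def)
    moreover have "\<forall>x\<in>Gp_C V \<times> {False}. \<forall>y\<in>Gp_C V \<times> {False}. x \<noteq> y \<longrightarrow> Gpp_E V E x y"
      by (auto simp: Gp_C_def Gpp_E_def Gp_E_def)
    ultimately show ?thesis unfolding is_clique_def by blast
  qed
  show "\<forall>S. maximal_stable (Gpp_V V) (Gpp_E V E) S \<longrightarrow> (Gp_C V \<times> {False}) \<inter> S \<noteq> {}"
  proof (intro allI impI notI)
    fix S assume S: "maximal_stable (Gpp_V V) (Gpp_E V E) S" and e: "(Gp_C V \<times> {False}) \<inter> S = {}"
    have SV: "S \<subseteq> Gpp_V V" and st: "\<forall>x\<in>S. \<forall>y\<in>S. x\<noteq>y \<longrightarrow> \<not> Gpp_E V E x y"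
      using S unfolding maximal_stable_def is_stable_def by blast+
    have "\<forall>v\<in>V. \<exists>i\<in>{1,2,3}. (v,i)\<in>{w. (w,False)\<in>S}"
    proof (rule ballI, rule ccontr)
      fix v assume v: "v\<in>V" and n: "\<not> (\<exists>i\<in>{1,2,3}. (v,i)\<in>{w. (w,False)\<in>S})"
      have "((v,0),False) \<in> Gp_C V \<times> {False}" using v by (simp add: Gp_C_def)
      hence "((v,0),False) \<notin> S" using e by blast
      moreover have "((v,0),False) \<in> Gpp_V V" using v by (simp add: Gpp_V_def Gp_V_def)
      moreover have "\<forall>y\<in>S. \<not> Gpp_E V E ((v,0),False) y \<and> \<not> Gpp_E V E y ((v,0),False)"
      proof
        fix y assume y: "y\<in>S"
        have "y \<in> Gpp_V V" using y SV by blast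
        hence "fst (fst y) \<in> V \<and> snd (fst y) \<in> {0,1,2,3}" unfolding Gpp_V_def Gp_V_def by auto
        then obtain u j b where uj: "y = ((u,j),b)" "u\<in>V" "j\<in>{0,1,2,3}" by (metis prod.collapse)
        have "((u,0),False) \<in> Gp_C V \<times> {False}" using uj(2) by (simp add: Gp_C_def)
        hence "((u,0),False) \<notin> S" using e by blast
        moreover have "(v,0) \<in> Gp_C V" using v unfolding Gp_C_def by auto
        moreover have "\<forall>i\<in>{1,2,3}. ((v,i),False) \<notin> S" using n by simp
        ultimately show "\<not> Gpp_E V E ((v,0),False) y \<and> \<not> Gpp_E V E y ((v,0),False)"
          using y uj(1,3) by (cases b; auto simp: Gpp_E_def Gp_E_def)
      qed
      ultimately show False using add_stable[OF S] by blast
    qed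
    moreover have "\<forall>x\<in>{w. (w,False)\<in>S}. \<forall>y\<in>{w. (w,False)\<in>S}. x\<noteq>y \<longrightarrow> \<not> Gp_E E x y"
    proof (intro ballI impI)
      fix x y assume "x\<in>{w. (w,False)\<in>S}" "y\<in>{w. (w,False)\<in>S}" "x\<noteq>y"
      hence "\<not> Gpp_E V E (x,False) (y,False)" using st by blast
      thus "\<not> Gp_E E x y" by (simp add: Gpp_E_def)
    qed
    ultimately show False using col_from assms by blast
  qed
qed

lemma pend_strong:
  assumes "w \<in> Gp_V V - Gp_C V"
  shows "strong_clique (Gpp_V V) (Gpp_E V E) {(w,False),(w,True)}"
  unfolding strong_clique_def
proof
  show "is_clique (Gpp_V V) (Gpp_E V E) {(w,False),(w,True)}"
    using assms unfolding is_clique_def Gpp_V_def Gpp_E_def by auto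
  show "\<forall>S. maximal_stable (Gpp_V V) (Gpp_E V E) S \<longrightarrow> {(w,False),(w,True)} \<inter> S \<noteq> {}"
  proof (intro allI impI notI)
    fix S assume S: "maximal_stable (Gpp_V V) (Gpp_E V E) S" and e: "{(w,False),(w,True)} \<inter> S = {}"
    have "\<forall>y\<in>S. \<not> Gpp_E V E (w,True) y \<and> \<not> Gpp_E V E y (w,True)"
    proof
      fix y assume "y\<in>S"
      hence "y \<noteq> (w,False)" using e by auto
      thus "\<not> Gpp_E V E (w,True) y \<and> \<not> Gpp_E V E y (w,True)" unfolding Gpp_E_def
        by (cases y) auto
    qed
    moreover have "(w,True) \<in> Gpp_V V" using assms unfolding Gpp_V_def by auto
    ultimately show False using add_stable[OF S] e by blast
  qed
qed

lemma GppE_FF[simp]: "Gpp_E V E (a,False) (b,False) \<longleftrightarrow> Gp_E E a b"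
  by (simp add: Gpp_E_def)

lemma stable_F: "is_stable (Gp_V V) (Gp_E E) T \<Longrightarrow> is_stable (Gpp_V V) (Gpp_E V E) (T \<times> {False})"
  unfolding is_stable_def Gpp_V_def by auto

lemma GppE_C0:
  assumes "v \<in> V" "Gpp_E V E ((v,0),False) y"
  shows "snd y = False \<and> Gp_E E (v,0) (fst y)"
proof -
  have "(v,0) \<in> Gp_C V" using assms(1) by (simp add: Gp_C_def)
  thus ?thesis using assms(2) by (cases y) (auto simp: Gpp_E_def)
qed

lemma GpE_diff: "x\<noteq>y \<Longrightarrow> Gp_E E (x,i) (y,j) \<longleftrightarrow> i = j \<and> (i = 0 \<or> (i\<in>{1,2,3} \<and> E x y))"
  by (auto simp: Gp_E_def)

lemma GpE_same: "\<not> E x x \<Longrightarrow> Gp_E E (x,i) (x,j) \<longleftrightarrow> i \<noteq> j"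
  by (auto simp: Gp_E_def)

lemma G2_noK:
  assumes fin: "finite V" and irr: "\<forall>x. \<not> E x x"
    and five: "card V \<ge> 5" and deg: "min_degree_ge V E 3"
    and col: "three_colorable V E" and v: "v \<in> V" and vK: "((v,0),False) \<in> K"
  shows "\<not> strong_clique (Gpp_V V) (Gpp_E V E) K"
proof
  assume s: "strong_clique (Gpp_V V) (Gpp_E V E) K"
  hence Kc: "is_clique (Gpp_V V) (Gpp_E V E) K" by (simp add: strong_clique_def)
  have cl: "\<forall>x\<in>K. \<forall>y\<in>K. x\<noteq>y \<longrightarrow> Gpp_E V E x y" using Kc unfolding is_clique_def by simp
  have KV: "K \<subseteq> Gpp_V V" using Kc unfolding is_clique_def by simp
  have girr: "\<forall>x. \<not> Gpp_E V E x x" using Gpp_E_irrefl irr by blast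
  show False
  proof (cases "K \<subseteq> Gp_C V \<times> {False}")
    case True
    obtain T where T: "is_stable (Gp_V V) (Gp_E E) T" "\<forall>v\<in>V. \<exists>i\<in>{1,2,3}. (v,i)\<in>T"
      using col_T col by blast
    have "\<forall>k\<in>K. \<exists>t\<in>T \<times> {False}. Gpp_E V E k t"
    proof
      fix k assume "k\<in>K"
      then obtain u where u: "k = ((u,0),False)" "u\<in>V" using True unfolding Gp_C_def by auto
      then obtain i where "i\<in>{1,2,3}" "(u,i)\<in>T" using T by blast
      thus "\<exists>t\<in>T \<times> {False}. Gpp_E V E k t" using u by (intro bexI[of _ "((u,i),False)"]) (auto simp: Gp_E_def)
    qed
    thus False using not_strong[OF Gpp_fin[OF fin] stable_F[OF T(1)] _ girr] s by blast
  next
    case False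
    then obtain z where z: "z\<in>K" "z \<notin> Gp_C V \<times> {False}" by blast
    have vC: "((v,0),False) \<in> Gp_C V \<times> {False}" using v by (simp add: Gp_C_def)
    hence "z \<noteq> ((v,0),False)" using z by blast
    hence "Gpp_E V E ((v,0),False) z" using cl[rule_format, OF vK z(1)] by simp
    hence zz: "snd z = False" "Gp_E E (v,0) (fst z)" using GppE_C0[OF v] by blast+
    have "z \<in> Gpp_V V" using z(1) KV by blast
    hence "fst z \<in> Gp_V V" using zz(1) unfolding Gpp_V_def by (cases z) auto
    hence zV: "fst (fst z) \<in> V" "snd (fst z) \<in> {0,1,2,3}" unfolding Gp_V_def by auto
    obtain u j where uj: "fst z = (u,j)" by (cases "fst z") blast
    have "u = v \<and> j \<noteq> 0"
    proof (cases "u = v")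
      case True thus ?thesis using zz(2) uj GpE_same[of E v 0 j] irr by simp
    next
      case False
      hence "j = 0" using zz(2) uj GpE_diff[of v u E 0 j] by auto
      hence "z \<in> Gp_C V \<times> {False}" using zz(1) uj zV by (cases z) (auto simp: Gp_C_def)
      thus ?thesis using z by blast
    qed
    hence zvj: "z = ((v,j),False)" "j \<noteq> 0" using zz(1) uj by (cases z; auto)+
    have allv: "\<forall>y\<in>K. \<exists>k\<in>{0,1,2,3}. y = ((v,k),False)"
    proof
      fix y assume y: "y\<in>K"
      show "\<exists>k\<in>{0,1,2,3}. y = ((v,k),False)"
      proof (cases "y = ((v,0),False) \<or> y = z")
        case True
        have "j \<in> {0,1,2,3}" using zV uj by simp
        thus ?thesis using True zvj(1) by blast
      next
        case False
        hence ne: "((v,0),False) \<noteq> y" "z \<noteq> y" by auto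
        have g1: "Gpp_E V E ((v,0),False) y" using cl[rule_format, OF vK y ne(1)] .
        have g2: "Gpp_E V E z y" using cl[rule_format, OF z(1) y ne(2)] .
        have y1: "snd y = False" "Gp_E E (v,0) (fst y)" using GppE_C0[OF v g1] by blast+
        have y2: "Gp_E E (v,j) (fst y)" using g2 zvj(1) y1(1) by (cases y) simp
        note yy = y1 y2
        obtain a k where ak: "fst y = (a,k)" by (cases "fst y") blast
        have "y \<in> Gpp_V V" using y KV by blast
        hence "fst y \<in> Gp_V V" using yy(1) unfolding Gpp_V_def by (cases y) auto
        hence yV: "k \<in> {0,1,2,3}" using ak unfolding Gp_V_def by auto
        have "a = v"
        proof (rule ccontr)
          assume "a \<noteq> v"
          hence "k = 0" "k = j" using yy(2,3) ak GpE_diff[of v a E 0 k] GpE_diff[of v a E j k] by auto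
          thus False using zvj(2) by simp
        qed
        thus ?thesis using yy(1) ak yV by (cases y) auto
      qed
    qed
    obtain T where T: "is_stable (Gp_V V) (Gp_E E) T" "\<forall>k\<in>{0,1,2,3}. \<exists>t\<in>T. Gp_E E (v,k) t"
      using gadget[OF v irr five deg fin] by blast
    have "\<forall>k\<in>K. \<exists>t\<in>T \<times> {False}. Gpp_E V E k t"
    proof
      fix y assume "y\<in>K"
      then obtain k where k: "k\<in>{0,1,2,3}" "y = ((v,k),False)" using allv by blast
      then obtain t where "t\<in>T" "Gp_E E (v,k) t" using T(2) by blast
      thus "\<exists>t\<in>T \<times> {False}. Gpp_E V E y t" using k by (intro bexI[of _ "(t,False)"]) auto
    qed
    thus False using not_strong[OF Gpp_fin[OF fin] stable_F[OF T(1)] _ girr] s by blast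
  qed
qed

lemma cnb:
  assumes tf: "triangle_free V E" and irr: "\<forall>x. \<not> E x x"
    and V: "x1\<in>V" "x2\<in>V" "x3\<in>V"
    and n: "(x3,i3)\<noteq>(x1,i1)" "(x3,i3)\<noteq>(x2,i2)" "(x1,i1)\<noteq>(x2,i2)"
    and e12: "Gp_E E (x1,i1) (x2,i2)" and e13: "Gp_E E (x1,i1) (x3,i3)" and e23: "Gp_E E (x2,i2) (x3,i3)"
  shows "(x1 = x2 \<and> x3 = x1) \<or> (x1 \<noteq> x2 \<and> i1 = 0 \<and> i2 = 0 \<and> i3 = 0 \<and> x3 \<noteq> x1 \<and> x3 \<noteq> x2)"
proof (cases "x1 = x2")
  case True
  hence "i1 \<noteq> i2" using n(3) by simp
  show ?thesis
  proof (rule ccontr)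
    assume "\<not> ?thesis"
    hence "x3 \<noteq> x1" using True by simp
    hence "i1 = i3" "i2 = i3" using e13 e23 True GpE_diff[of x1 x3 E i1 i3] GpE_diff[of x1 x3 E i2 i3] by auto
    thus False using \<open>i1 \<noteq> i2\<close> by simp
  qed
next
  case False
  have ii: "i1 = i2" "i1 = 0 \<or> (i1\<in>{1,2,3} \<and> E x1 x2)" using e12 False GpE_diff[of x1 x2 E i1 i2] by auto
  have x31: "x3 \<noteq> x1"
  proof
    assume "x3 = x1"
    hence "i2 = i3" using e23 False GpE_diff[of x2 x1 E i2 i3] by auto
    thus False using n(1) ii(1) \<open>x3 = x1\<close> by simp
  qed
  have x32: "x3 \<noteq> x2"
  proof
    assume "x3 = x2"
    hence "i1 = i3" using e13 False GpE_diff[of x1 x2 E i1 i3] by auto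
    thus False using n(2) ii(1) \<open>x3 = x2\<close> by simp
  qed
  have a: "i1 = i3" "i1 = 0 \<or> E x1 x3" using e13 x31 GpE_diff[of x1 x3 E i1 i3] by auto
  have b: "i2 = i3" "i2 = 0 \<or> E x2 x3" using e23 x32 GpE_diff[of x2 x3 E i2 i3] by auto
  show ?thesis
  proof (cases "i1 = 0")
    case True thus ?thesis using False ii a b x31 x32 by simp
  next
    case nz: False
    hence "E x1 x2" "E x1 x3" "E x2 x3" using ii a b by auto
    thus ?thesis using tf V unfolding triangle_free_def by blast
  qed
qed

lemma cnG:
  assumes tf: "triangle_free V E" and irr: "\<forall>x. \<not> E x x"
    and V: "a\<in>Gp_V V" "b\<in>Gp_V V" "c\<in>Gp_V V" "d\<in>Gp_V V"
    and dist: "distinct [a,b,c,d]"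
    and e: "Gp_E E a b" "Gp_E E a c" "Gp_E E a d" "Gp_E E b c" "Gp_E E b d"
  shows "Gp_E E c d"
proof -
  obtain x1 i1 where 1: "a = (x1,i1)" by (cases a) blast
  obtain x2 i2 where 2: "b = (x2,i2)" by (cases b) blast
  obtain x3 i3 where 3: "c = (x3,i3)" by (cases c) blast
  obtain x4 i4 where 4: "d = (x4,i4)" by (cases d) blast
  have xV: "x1\<in>V" "x2\<in>V" "x3\<in>V" "x4\<in>V" using V 1 2 3 4 unfolding Gp_V_def by auto
  have d: "(x3,i3)\<noteq>(x1,i1)" "(x3,i3)\<noteq>(x2,i2)" "(x1,i1)\<noteq>(x2,i2)" "(x4,i4)\<noteq>(x1,i1)" "(x4,i4)\<noteq>(x2,i2)"
     "(x3,i3)\<noteq>(x4,i4)" using dist 1 2 3 4 by auto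
  have c3: "(x1 = x2 \<and> x3 = x1) \<or> (x1 \<noteq> x2 \<and> i1 = 0 \<and> i2 = 0 \<and> i3 = 0 \<and> x3 \<noteq> x1 \<and> x3 \<noteq> x2)"
    using cnb[OF tf irr xV(1,2,3) d(1,2,3)] e 1 2 3 by simp
  have c4: "(x1 = x2 \<and> x4 = x1) \<or> (x1 \<noteq> x2 \<and> i1 = 0 \<and> i2 = 0 \<and> i4 = 0 \<and> x4 \<noteq> x1 \<and> x4 \<noteq> x2)"
    using cnb[OF tf irr xV(1,2,4) d(4,5,3)] e 1 2 4 by simp
  show ?thesis
  proof (cases "x1 = x2")
    case True
    hence "x3 = x4" "i3 \<noteq> i4" using c3 c4 d(6) by auto
    thus ?thesis using 3 4 GpE_same[of E x3 i3 i4] irr by simp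
  next
    case False
    hence "i3 = 0" "i4 = 0" "x3 \<noteq> x4" using c3 c4 d(6) by auto
    thus ?thesis using 3 4 GpE_diff[of x3 x4 E i3 i4] by simp
  qed
qed

lemma dia1:
  assumes tf: "triangle_free V E" and irr: "\<forall>x. \<not> E x x"
  shows "diamond_free (Gp_V V) (Gp_E E)"
  unfolding diamond_free_def using cnG[OF tf irr] by blast

lemma pendR: "Gpp_E V E x y \<Longrightarrow> snd y \<Longrightarrow> x = (fst y, False)"
  by (cases x; cases y) (auto simp: Gpp_E_def)
lemma pendL: "Gpp_E V E x y \<Longrightarrow> snd x \<Longrightarrow> y = (fst x, False)"
  by (cases x; cases y) (auto simp: Gpp_E_def)

lemma dia2:
  assumes tf: "triangle_free V E" and irr: "\<forall>x. \<not> E x x"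
  shows "diamond_free (Gpp_V V) (Gpp_E V E)"
  unfolding diamond_free_def
proof (intro notI, elim bexE conjE)
  fix a b c d
  assume V: "a\<in>Gpp_V V" "b\<in>Gpp_V V" "c\<in>Gpp_V V" "d\<in>Gpp_V V"
    and dist: "distinct [a,b,c,d]"
    and e: "Gpp_E V E a b" "Gpp_E V E a c" "Gpp_E V E a d" "Gpp_E V E b c" "Gpp_E V E b d"
    and ncd: "\<not> Gpp_E V E c d"
  have sa: "\<not> snd a" using pendL[OF e(1)] pendL[OF e(2)] dist by auto
  have sb: "\<not> snd b" using pendL[OF e(4)] pendR[OF e(1)] dist by auto
  have sc: "\<not> snd c" using pendR[OF e(2)] pendR[OF e(4)] dist by auto
  have sd: "\<not> snd d" using pendR[OF e(3)] pendR[OF e(5)] dist by auto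
  obtain a' b' c' d' where ab: "a = (a',False)" "b = (b',False)" "c = (c',False)" "d = (d',False)"
    using sa sb sc sd by (metis prod.collapse)
  have V': "a'\<in>Gp_V V" "b'\<in>Gp_V V" "c'\<in>Gp_V V" "d'\<in>Gp_V V" using V ab unfolding Gpp_V_def by auto
  have "distinct [a',b',c',d']" using dist ab by auto
  moreover have "Gp_E E a' b'" "Gp_E E a' c'" "Gp_E E a' d'" "Gp_E E b' c'" "Gp_E E b' d'" using e ab by simp_all
  ultimately have "Gp_E E c' d'" using cnG[OF tf irr V'] by blast
  thus False using ncd ab by simp
qed

theorem mainTheorem7:
  fixes V :: "'a set" and E :: "'a \<Rightarrow> 'a \<Rightarrow> bool"
  assumes fin: "finite V"
    and sym: "\<And>u v. E u v \<Longrightarrow> E v u"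
    and irrefl: "\<And>v. \<not> E v v"
    and tf: "triangle_free V E"
    and five: "card V \<ge> 5"
    and deg: "min_degree_ge V E 3"
  shows "diamond_free (Gp_V V) (Gp_E E) \<and> diamond_free (Gpp_V V) (Gpp_E V E) \<and>
    ((\<not> three_colorable V E) \<longleftrightarrow> strong_clique (Gp_V V) (Gp_E E) (Gp_C V)) \<and>
    ((\<not> three_colorable V E) \<longleftrightarrow> (\<exists>K. strong_clique (Gp_V V) (Gp_E E) K)) \<and>
    ((\<not> three_colorable V E) \<longleftrightarrow> strong_clique (Gpp_V V) (Gpp_E V E) (Gp_C V \<times> {False})) \<and>
    ((\<not> three_colorable V E) \<longleftrightarrow>
       (\<forall>x\<in>Gpp_V V. \<exists>K. strong_clique (Gpp_V V) (Gpp_E V E) K \<and> x \<in> K)) \<and>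
    ((\<not> three_colorable V E) \<longleftrightarrow>
       (strong_clique (Gpp_V V) (Gpp_E V E) (Gp_C V \<times> {False}) \<and>
        (\<forall>w\<in>Gp_V V - Gp_C V. strong_clique (Gpp_V V) (Gpp_E V E) {(w, False), (w, True)}))) \<and>
    ((\<not> three_colorable V E) \<longleftrightarrow> partition_into_strong_cliques (Gpp_V V) (Gpp_E V E))"
proof -
  have irr: "\<forall>x. \<not> E x x" using irrefl by blast
  have "V \<noteq> {}" using five by auto
  then obtain v0 where v0: "v0 \<in> V" by blast
  have v0C: "((v0,0),False) \<in> Gp_C V \<times> {False}" using v0 by (simp add: Gp_C_def)
  have v0V: "((v0,0),False) \<in> Gpp_V V" using v0 by (simp add: Gpp_V_def Gp_V_def)
  let ?N = "\<not> three_colorable V E"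
  have noK1: "\<And>K. \<not> ?N \<Longrightarrow> \<not> strong_clique (Gp_V V) (Gp_E E) K"
    using G1_noK[OF fin sym irr tf five deg] by blast
  have noK2: "\<And>K. \<not> ?N \<Longrightarrow> ((v0,0),False) \<in> K \<Longrightarrow> \<not> strong_clique (Gpp_V V) (Gpp_E V E) K"
    using G2_noK[OF fin irr five deg _ v0] by blast
  have C2: "?N \<Longrightarrow> strong_clique (Gpp_V V) (Gpp_E V E) (Gp_C V \<times> {False})" by (rule G2_C_strong)
  have pend: "\<forall>w\<in>Gp_V V - Gp_C V. strong_clique (Gpp_V V) (Gpp_E V E) {(w, False), (w, True)}"
    using pend_strong by blast
  have C1: "?N \<Longrightarrow> strong_clique (Gp_V V) (Gp_E E) (Gp_C V)" by (rule G1_C_strong)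
  have p3: "?N \<longleftrightarrow> strong_clique (Gp_V V) (Gp_E E) (Gp_C V)" using C1 noK1 by metis
  have p4: "?N \<longleftrightarrow> (\<exists>K. strong_clique (Gp_V V) (Gp_E E) K)" using C1 noK1 by metis
  have p5: "?N \<longleftrightarrow> strong_clique (Gpp_V V) (Gpp_E V E) (Gp_C V \<times> {False})" using C2 noK2[OF _ v0C] by metis
  have p6: "?N \<longleftrightarrow> (\<forall>x\<in>Gpp_V V. \<exists>K. strong_clique (Gpp_V V) (Gpp_E V E) K \<and> x \<in> K)"
  proof
    assume N: ?N
    show "\<forall>x\<in>Gpp_V V. \<exists>K. strong_clique (Gpp_V V) (Gpp_E V E) K \<and> x \<in> K"
    proof
      fix x assume x: "x \<in> Gpp_V V"
      show "\<exists>K. strong_clique (Gpp_V V) (Gpp_E V E) K \<and> x \<in> K"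
      proof (cases "x \<in> Gp_C V \<times> {False}")
        case True thus ?thesis using C2[OF N] by blast
      next
        case False
        hence "fst x \<in> Gp_V V - Gp_C V" using x unfolding Gpp_V_def by (cases x) auto
        moreover have "x \<in> {(fst x, False), (fst x, True)}" by (cases x) auto
        ultimately show ?thesis using pend by blast
      qed
    qed
  next
    assume "\<forall>x\<in>Gpp_V V. \<exists>K. strong_clique (Gpp_V V) (Gpp_E V E) K \<and> x \<in> K"
    thus ?N using v0V noK2 by blast
  qed
  have p7: "?N \<longleftrightarrow> (strong_clique (Gpp_V V) (Gpp_E V E) (Gp_C V \<times> {False}) \<and>
        (\<forall>w\<in>Gp_V V - Gp_C V. strong_clique (Gpp_V V) (Gpp_E V E) {(w, False), (w, True)}))"
    using p5 pend by blast
  have p8: "?N \<longleftrightarrow> partition_into_strong_cliques (Gpp_V V) (Gpp_E V E)"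
  proof
    assume N: ?N
    let ?P = "insert (Gp_C V \<times> {False}) ((\<lambda>w. {(w, False), (w, True)}) ` (Gp_V V - Gp_C V))"
    have U: "\<Union>?P = Gpp_V V"
    proof
      show "\<Union>?P \<subseteq> Gpp_V V" unfolding Gpp_V_def Gp_C_def Gp_V_def by auto
      show "Gpp_V V \<subseteq> \<Union>?P"
      proof
        fix x assume x: "x \<in> Gpp_V V"
        show "x \<in> \<Union>?P"
        proof (cases "x \<in> Gp_C V \<times> {False}")
          case True thus ?thesis by blast
        next
          case False
          hence "fst x \<in> Gp_V V - Gp_C V" using x unfolding Gpp_V_def by (cases x) auto
          moreover have "x \<in> {(fst x, False), (fst x, True)}" by (cases x) auto
          ultimately show ?thesis by blast
        qed
      qed
    qed
    have S: "\<forall>K\<in>?P. K \<noteq> {} \<and> strong_clique (Gpp_V V) (Gpp_E V E) K"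
    proof
      fix K assume "K \<in> ?P"
      hence "K = Gp_C V \<times> {False} \<or> (\<exists>w\<in>Gp_V V - Gp_C V. K = {(w,False),(w,True)})" by blast
      thus "K \<noteq> {} \<and> strong_clique (Gpp_V V) (Gpp_E V E) K"
      proof (elim disjE bexE)
        assume "K = Gp_C V \<times> {False}" thus ?thesis using C2[OF N] v0C by auto
      next
        fix w assume "w \<in> Gp_V V - Gp_C V" "K = {(w,False),(w,True)}"
        thus ?thesis using pend by auto
      qed
    qed
    have D: "\<forall>K1\<in>?P. \<forall>K2\<in>?P. K1 \<noteq> K2 \<longrightarrow> K1 \<inter> K2 = {}"
    proof (intro ballI impI)
      fix K1 K2 assume K1: "K1 \<in> ?P" and K2: "K2 \<in> ?P" and ne: "K1 \<noteq> K2"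
      have pc: "\<And>w. w \<in> Gp_V V - Gp_C V \<Longrightarrow> {(w,False),(w,True)} \<inter> (Gp_C V \<times> {False}) = {}" by auto
      have pp: "\<And>w w'. {(w,False),(w,True)} \<noteq> {(w',False),(w',True)} \<Longrightarrow> {(w,False),(w,True)} \<inter> {(w',False),(w',True)} = {}" by auto
      from K1 have k1: "K1 = Gp_C V \<times> {False} \<or> (\<exists>w\<in>Gp_V V - Gp_C V. K1 = {(w,False),(w,True)})" by blast
      from K2 have k2: "K2 = Gp_C V \<times> {False} \<or> (\<exists>w\<in>Gp_V V - Gp_C V. K2 = {(w,False),(w,True)})" by blast
      show "K1 \<inter> K2 = {}"
        using k1 k2
      proof (elim disjE bexE)
        assume "K1 = Gp_C V \<times> {False}" "K2 = Gp_C V \<times> {False}" thus ?thesis using ne by simp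
      next
        fix w assume "w \<in> Gp_V V - Gp_C V" "K1 = Gp_C V \<times> {False}" "K2 = {(w,False),(w,True)}"
        thus ?thesis using pc[of w] by (simp add: Int_commute)
      next
        fix w assume "w \<in> Gp_V V - Gp_C V" "K1 = {(w,False),(w,True)}" "K2 = Gp_C V \<times> {False}"
        thus ?thesis using pc[of w] by simp
      next
        fix w w' assume a: "K1 = {(w,False),(w,True)}" "K2 = {(w',False),(w',True)}"
        have "{(w,False),(w,True)} \<noteq> {(w',False),(w',True)}" using ne unfolding a .
        thus ?thesis unfolding a by (rule pp)
      qed
    qed
    show "partition_into_strong_cliques (Gpp_V V) (Gpp_E V E)"
      unfolding partition_into_strong_cliques_def
      apply (rule exI[of _ ?P]) by (intro conjI U S D)
  next
    assume "partition_into_strong_cliques (Gpp_V V) (Gpp_E V E)"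
    then obtain P where P0: "\<Union>P = Gpp_V V \<and> (\<forall>K\<in>P. K \<noteq> {} \<and> strong_clique (Gpp_V V) (Gpp_E V E) K) \<and>
      (\<forall>K1\<in>P. \<forall>K2\<in>P. K1 \<noteq> K2 \<longrightarrow> K1 \<inter> K2 = {})"
      unfolding partition_into_strong_cliques_def by (elim exE)
    have P1: "\<Union>P = Gpp_V V" using conjunct1[OF P0] .
    have P2: "\<forall>K\<in>P. K \<noteq> {} \<and> strong_clique (Gpp_V V) (Gpp_E V E) K" using conjunct1[OF conjunct2[OF P0]] .
    note P = P1 P2
    have "((v0,0),False) \<in> \<Union>P" using v0V P(1) by (simp only:)
    then obtain K where K: "K \<in> P" "((v0,0),False) \<in> K" by blast
    have "strong_clique (Gpp_V V) (Gpp_E V E) K" using P(2) K(1) by blast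
    thus ?N using noK2[OF _ K(2)] by blast
  qed
  show ?thesis by (intro conjI dia1[OF tf irr] dia2[OF tf irr] p3 p4 p5 p6 p7 p8)
qed

end
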